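(* Let $\beta\in(0,\tfrac12)$ and let $\lambda$ be an eigenvalue of $\Delta_\beta$. Then $\lambda\ge\lambda_1(\beta)$.
   Context: Tree: for an integer $m\ge2$, $\mathbb{T}_m$ has vertices the root $\emptyset$ and all finite sequences $(\emptyset,a_1,\dots,a_k)$, $a_i\in\{0,\dots,m-1\}$; $|x|$ is the level, successors of $x$ are $(x,i)$, $\hat x$ is the immediate predecessor of $x\ne\emptyset$. A branch is an infinite sequence $(x_n)_{n\ge0}$ with $x_0=\emptyset$, $x_{n+1}$ a successor of $x_n$; $\lim_{x\to y}u(x)=\lim_n u(x_n)$ for a branch $y=(x_n)$. Operator: $p_\beta=\beta/(1-\beta)$ for $\beta\in(0,1)$. $\Delta_\beta u(\emptyset)=\frac1m\sum_{i=0}^{m-1}u(\emptyset,i)-u(\emptyset)$ and, for $x\ne\emptyset$, $\Delta_\beta u(x)=\big(\beta u(\hat x)+\frac{1-\beta}{m}\sum_{i=0}^{m-1}u(x,i)-u(x)\big)p_\beta^{-|x|}$. Eigenvalues: $\lambda\in\mathbb{R}$ is an eigenvalue of $\Delta_\beta$ if there is a bounded $u\not\equiv0$ with $-\Delta_\beta u=\lambda u$ on $\mathbb{T}_m$ and $\lim_{x\to y}u(x)=0$ for every branch $y$. $\mathcal{A}_\beta=\{\lambda>0:\exists v:\mathbb{T}_m\to\mathbb{R}\text{ and constants }0<c<C\text{ with } c<v<C \text{ and } \Delta_\beta v+\lambda v\le0 \text{ on }\mathbb{T}_m\}$, $\lambda_1(\beta)=\sup\mathcal{A}_\beta$. *)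

theory Defs
  imports "HOL-Analysis.Analysis"
begin

text \<open>Vertices of the m-ary tree T_m: finite sequences over {0..m-1}, represented as lists.
  The root is the empty list, the successor (x,i) is x @ [i], the predecessor of x is butlast x,
  and the level |x| is length x.\<close>

definition tree :: "nat \<Rightarrow> nat list set" where
  "tree m = {x. \<forall>a \<in> set x. a < m}"

definition p_beta :: "real \<Rightarrow> real" where
  "p_beta \<beta> = \<beta> / (1 - \<beta>)"

definition Delta :: "nat \<Rightarrow> real \<Rightarrow> (nat list \<Rightarrow> real) \<Rightarrow> nat list \<Rightarrow> real" where
  "Delta m \<beta> u x =
     (if x = [] then (1 / real m) * (\<Sum>i<m. u [i]) - u []
      else (\<beta> * u (butlast x) + ((1 - \<beta>) / real m) * (\<Sum>i<m. u (x @ [i])) - u x)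
           * (p_beta \<beta>) powi (- int (length x)))"

definition branch :: "nat \<Rightarrow> (nat \<Rightarrow> nat list) \<Rightarrow> bool" where
  "branch m xs \<longleftrightarrow> xs 0 = [] \<and> (\<forall>n. \<exists>i<m. xs (Suc n) = xs n @ [i])"

definition is_eigenvalue :: "nat \<Rightarrow> real \<Rightarrow> real \<Rightarrow> bool" where
  "is_eigenvalue m \<beta> lam \<longleftrightarrow>
     (\<exists>u :: nat list \<Rightarrow> real.
        (\<exists>B. \<forall>x \<in> tree m. \<bar>u x\<bar> \<le> B) \<and>
        (\<exists>x \<in> tree m. u x \<noteq> 0) \<and>
        (\<forall>x \<in> tree m. - Delta m \<beta> u x = lam * u x) \<and>
        (\<forall>xs. branch m xs \<longrightarrow> (\<lambda>n. u (xs n)) \<longlonglongrightarrow> 0))"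

definition A_set :: "nat \<Rightarrow> real \<Rightarrow> real set" where
  "A_set m \<beta> = {lam. lam > 0 \<and>
     (\<exists>v :: nat list \<Rightarrow> real. \<exists>c C. 0 < c \<and> c < C \<and>
        (\<forall>x \<in> tree m. c < v x \<and> v x < C \<and> Delta m \<beta> v x + lam * v x \<le> 0))}"

definition lambda1 :: "nat \<Rightarrow> real \<Rightarrow> real" where
  "lambda1 m \<beta> = Sup (A_set m \<beta>)"

end

theory Submission
  imports Defs
begin

lemma branch_tree: "branch m xs \<Longrightarrow> xs n \<in> tree m"
proof (induction n)
  case 0 then show ?case by (simp add: branch_def tree_def)
next
  case (Suc n)
  then obtain i where "i < m" "xs (Suc n) = xs n @ [i]" unfolding branch_def by blast
  with Suc show ?case by (auto simp: tree_def)
qed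

lemma Delta_lin: "Delta m \<beta> (\<lambda>x. t * v x - u x) y = t * Delta m \<beta> v y - Delta m \<beta> u y"
  by (simp add: Delta_def sum_subtractf sum_distrib_left[symmetric] algebra_simps)

lemma Delta_neg: "Delta m \<beta> (\<lambda>x. - u x) y = - Delta m \<beta> u y"
  by (simp add: Delta_def sum_negf algebra_simps)

lemma step_exists:
  assumes m: "m \<ge> 1" and b: "0 < \<beta>" "\<beta> < 1"
    and D: "Delta m \<beta> w z \<le> 0" and par: "z \<noteq> [] \<longrightarrow> w z \<le> w (butlast z)"
  shows "\<exists>i<m. w (z @ [i]) \<le> w z"
proof -
  have mpos: "real m > 0" using m by simp
  have S: "(\<Sum>i<m. w (z @ [i])) \<le> real m * w z"
  proof (cases "z = []")
    case True
    with D have "(1 / real m) * (\<Sum>i<m. w [i]) \<le> w []" by (simp add: Delta_def)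
    with mpos True show ?thesis by (simp add: field_simps)
  next
    case False
    have pp: "p_beta \<beta> > 0" using b by (simp add: p_beta_def)
    hence pos: "(p_beta \<beta>) powi (- int (length z)) > 0" by simp
    from D False have "(\<beta> * w (butlast z) + ((1 - \<beta>) / real m) * (\<Sum>i<m. w (z @ [i])) - w z)
           * (p_beta \<beta>) powi (- int (length z)) \<le> 0" by (simp add: Delta_def)
    with pos have br: "\<beta> * w (butlast z) + ((1 - \<beta>) / real m) * (\<Sum>i<m. w (z @ [i])) - w z \<le> 0"
      by (simp add: mult_le_0_iff)
    from par False have "\<beta> * w z \<le> \<beta> * w (butlast z)" using b by simp
    with br have "((1 - \<beta>) / real m) * (\<Sum>i<m. w (z @ [i])) \<le> (1 - \<beta>) * w z" by (simp add: algebra_simps)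
    hence "(1 - \<beta>) * ((\<Sum>i<m. w (z @ [i])) / real m) \<le> (1 - \<beta>) * w z" by simp
    hence "(\<Sum>i<m. w (z @ [i])) / real m \<le> w z" using b mult_le_cancel_left_pos[of "1 - \<beta>"] by (metis diff_gt_0_iff_gt)
    with mpos show ?thesis by (simp add: field_simps)
  qed
  show ?thesis
  proof (rule ccontr)
    assume "\<not> ?thesis"
    hence "\<forall>i\<in>{..<m}. w z < w (z @ [i])" by auto
    hence lt: "\<And>i. i \<in> {..<m} \<Longrightarrow> w z < w (z @ [i])" by auto
    have "0 \<in> {..<m}" using m by simp
    hence ne: "{..<m} \<noteq> {}" by blast
    have "(\<Sum>i<m. w z) < (\<Sum>i<m. w (z @ [i]))"
      using sum_strict_mono[OF finite_lessThan ne lt] .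
    with S show False by simp
  qed
qed


lemma good_exists:
  fixes w :: "nat list \<Rightarrow> real" and w0 :: real
  assumes m: "m \<ge> 1"
  shows "\<forall>x. length x = n \<longrightarrow> x \<in> tree m \<longrightarrow> w x \<le> w0 \<longrightarrow>
     (\<exists>y. y \<in> tree m \<and> w y \<le> w0 \<and> (y \<noteq> [] \<longrightarrow> w y \<le> w (butlast y)))"
proof (induction n)
  case 0 then show ?case by auto
next
  case (Suc n)
  show ?case
  proof (intro allI impI)
    fix x assume x: "length x = Suc n" "x \<in> tree m" "w x \<le> w0"
    show "\<exists>y. y \<in> tree m \<and> w y \<le> w0 \<and> (y \<noteq> [] \<longrightarrow> w y \<le> w (butlast y))"
    proof (cases "w x \<le> w (butlast x)")
      case True with x show ?thesis by blast
    next
      case False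
      have "butlast x \<in> tree m" using x(2) by (auto simp: tree_def dest: in_set_butlastD)
      moreover have "length (butlast x) = n" using x(1) by simp
      moreover have "w (butlast x) \<le> w0" using False x(3) by linarith
      ultimately show ?thesis using Suc.IH by blast
    qed
  qed
qed

lemma descent:
  assumes m: "m \<ge> 1" and b: "0 < \<beta>" "\<beta> < 1"
    and H1: "\<forall>x\<in>tree m. w x \<le> w0 \<longrightarrow> Delta m \<beta> w x \<le> 0"
    and x0: "x0 \<in> tree m" "w x0 \<le> w0"
  shows "\<exists>xs N. branch m xs \<and> (\<forall>n\<ge>N. w (xs n) \<le> w0)"
proof -
  define good where "good z \<longleftrightarrow> z \<in> tree m \<and> w z \<le> w0 \<and> (z \<noteq> [] \<longrightarrow> w z \<le> w (butlast z))" for z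
  obtain y where y: "good y" using good_exists[OF m, of "length x0" w w0] x0 unfolding good_def by blast
  have stp: "\<exists>i<m. good (z @ [i])" if "good z" for z
  proof -
    from that have "Delta m \<beta> w z \<le> 0" "z \<noteq> [] \<longrightarrow> w z \<le> w (butlast z)" using H1 unfolding good_def by auto
    from step_exists[OF m b this] obtain i where i: "i < m" "w (z @ [i]) \<le> w z" by blast
    with that have "good (z @ [i])" unfolding good_def by (auto simp: tree_def)
    with i show ?thesis by blast
  qed
  define nxt where "nxt z = z @ [SOME i. i < m \<and> good (z @ [i])]" for z
  have nxt: "good (nxt z) \<and> (\<exists>i<m. nxt z = z @ [i])" if "good z" for z
  proof -
    have "\<exists>i. i < m \<and> good (z @ [i])" using stp[OF that] by blast
    from someI_ex[OF this] show ?thesis unfolding nxt_def by blast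
  qed
  define zs where "zs k = (nxt ^^ k) y" for k
  have gz: "good (zs k)" for k
    by (induction k) (simp_all add: zs_def y nxt)
  have zsuc: "\<exists>i<m. zs (Suc k) = zs k @ [i]" for k
    using nxt[OF gz[of k]] by (simp add: zs_def)
  define xs where "xs n = (if n \<le> length y then take n y else zs (n - length y))" for n
  have ytree: "y \<in> tree m" using y unfolding good_def by simp
  have "branch m xs"
    unfolding branch_def
  proof (intro conjI allI)
    show "xs 0 = []" by (simp add: xs_def)
  next
    fix n
    show "\<exists>i<m. xs (Suc n) = xs n @ [i]"
    proof (cases "n < length y")
      case True
      hence "xs (Suc n) = take n y @ [y ! n]" "xs n = take n y"
        by (simp_all add: xs_def take_Suc_conv_app_nth)
      moreover have "y ! n < m" using ytree True by (auto simp: tree_def)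
      ultimately show ?thesis by (intro exI[of _ "y ! n"]) simp
    next
      case False
      hence e1: "xs (Suc n) = zs (Suc (n - length y))" by (simp add: xs_def Suc_diff_le)
      have e2: "xs n = zs (n - length y)" using False by (auto simp: xs_def zs_def)
      show ?thesis using zsuc[of "n - length y"] e1 e2 by simp
    qed
  qed
  moreover have "\<forall>n\<ge>length y. w (xs n) \<le> w0"
  proof (intro allI impI)
    fix n assume "length y \<le> n"
    hence "xs n = zs (n - length y)" by (auto simp: xs_def zs_def)
    with gz show "w (xs n) \<le> w0" unfolding good_def by simp
  qed
  ultimately show ?thesis by blast
qed


lemma kpow_bound:
  fixes p :: real assumes "0 \<le> p" "p < 1"
  shows "real k * p ^ k \<le> 1 / (1 - p)"
proof -
  have "real k * p ^ k = (\<Sum>j<k. p ^ k)" by simp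
  also have "\<dots> \<le> (\<Sum>j<k. p ^ j)"
    by (rule sum_mono) (use assms in \<open>auto intro: power_decreasing\<close>)
  also have "\<dots> = (1 - p ^ k) / (1 - p)" using assms by (simp add: sum_gp_strict)
  also have "\<dots> \<le> 1 / (1 - p)" using assms by (simp add: divide_right_mono)
  finally show ?thesis .
qed

lemma A_nonempty:
  assumes m: "m \<ge> 1" and b: "0 < \<beta>" "\<beta> < 1 / 2"
  shows "A_set m \<beta> \<noteq> {}"
proof -
  define p where "p = p_beta \<beta>"
  have p0: "0 < p" and p1: "p < 1" using b by (auto simp: p_def p_beta_def field_simps)
  have hp: "(1 - \<beta>) * p = \<beta>" using b by (simp add: p_def p_beta_def)
  define bb where "bb = 2 / (1 - p)"
  have bb0: "bb > 0" using p1 by (simp add: bb_def)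
  have bbp: "bb * (1 - p) = 2" using p1 by (simp add: bb_def field_simps)
  define f where "f k = 1 + real k * p ^ k + bb * p ^ k" for k :: nat
  define v where "v x = f (length x)" for x :: "nat list"
  define C0 where "C0 = 1 + 1 / (1 - p) + bb"
  define C where "C = C0 + 1"
  define lam0 where "lam0 = (1 - 2 * \<beta>) / C"
  have f1: "f k \<ge> 1" for k using p0 bb0 by (simp add: f_def)
  have f2: "f k \<le> C0" for k
  proof -
    have "real k * p ^ k \<le> 1 / (1 - p)" using kpow_bound[of p k] p0 p1 by simp
    moreover have "bb * p ^ k \<le> bb" using bb0 p0 p1 by (simp add: power_le_one)
    ultimately show ?thesis by (simp add: f_def C0_def)
  qed
  have C0pos: "C0 \<ge> 1" using f1[of 0] f2[of 0] by simp
  have iden: "\<beta> * f k + (1 - \<beta>) * f (Suc (Suc k)) - f (Suc k) = (2 * \<beta> - 1) * p ^ Suc k" for k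
  proof -
    have "\<beta> * f k + (1 - \<beta>) * f (Suc (Suc k)) - f (Suc k) - (2 * \<beta> - 1) * p ^ Suc k
       = ((1 - \<beta>) * p - \<beta>) * (p ^ k * (real k + bb) * (p - 1) + 2 * p * p ^ k)"
      unfolding f_def by (simp add: power_Suc algebra_simps)
    also have "\<dots> = 0" using hp by simp
    finally show ?thesis by simp
  qed
  have mpos: "real m > 0" using m by simp
  have D: "Delta m \<beta> v x \<le> - (1 - 2 * \<beta>)" for x
  proof (cases "x = []")
    case True
    have "Delta m \<beta> v x = f 1 - f 0" using True mpos by (simp add: Delta_def v_def)
    also have "\<dots> = p - bb * (1 - p)" by (simp add: f_def algebra_simps)
    also have "\<dots> \<le> - (1 - 2 * \<beta>)" using bbp p1 b by simp
    finally show ?thesis .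
  next
    case False
    then obtain k where k: "length x = Suc k" by (cases x) auto
    have s: "(\<Sum>i<m. v (x @ [i])) = real m * f (Suc (Suc k))" using k by (simp add: v_def)
    have "Delta m \<beta> v x = (\<beta> * f k + (1 - \<beta>) * f (Suc (Suc k)) - f (Suc k)) * p powi (- int (Suc k))"
      using False k mpos by (simp add: Delta_def v_def s p_def)
    also have "\<dots> = (2 * \<beta> - 1) * (p ^ Suc k * p powi (- int (Suc k)))" by (simp add: iden)
    also have "p ^ Suc k * p powi (- int (Suc k)) = 1"
    proof -
      have "p powi (- int (Suc k)) = inverse (p ^ Suc k)"
        by (simp only: power_int_minus power_int_of_nat)
      moreover have "p ^ Suc k \<noteq> 0" using p0 by simp
      ultimately show ?thesis by (metis right_inverse)
    qed
    finally show ?thesis by simp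
  qed
  have "lam0 \<in> A_set m \<beta>"
    unfolding A_set_def
  proof (intro CollectI conjI exI ballI)
    show "lam0 > 0" using b C0pos by (simp add: lam0_def C_def)
    show "0 < (1/2::real)" by simp
    show "(1/2::real) < C" using C0pos by (simp add: C_def)
    fix x assume "x \<in> tree m"
    show "1/2 < v x" using f1[of "length x"] by (simp add: v_def)
    show "v x < C" using f2[of "length x"] by (simp add: v_def C_def)
    have "lam0 * v x \<le> lam0 * C0" using f2 b C0pos by (intro mult_left_mono) (auto simp: v_def lam0_def C_def)
    also have "\<dots> \<le> 1 - 2 * \<beta>" using b C0pos by (simp add: lam0_def C_def field_simps)
    finally show "Delta m \<beta> v x + lam0 * v x \<le> 0" using D[of x] by simp
  qed
  thus ?thesis by blast
qed


lemma eigen_pos: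
  assumes "is_eigenvalue m \<beta> lam"
  shows "\<exists>u B x1. (\<forall>x \<in> tree m. \<bar>u x\<bar> \<le> B) \<and> x1 \<in> tree m \<and> u x1 > 0 \<and>
        (\<forall>x \<in> tree m. - Delta m \<beta> u x = lam * u x) \<and>
        (\<forall>xs. branch m xs \<longrightarrow> (\<lambda>n. u (xs n)) \<longlonglongrightarrow> 0)"
proof -
  obtain u B x1 where u: "\<forall>x \<in> tree m. \<bar>u x\<bar> \<le> B" "x1 \<in> tree m" "u x1 \<noteq> 0"
    "\<forall>x \<in> tree m. - Delta m \<beta> u x = lam * u x"
    "\<forall>xs. branch m xs \<longrightarrow> (\<lambda>n. u (xs n)) \<longlonglongrightarrow> 0"
    using assms unfolding is_eigenvalue_def by blast
  show ?thesis
  proof (cases "u x1 > 0")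
    case True with u show ?thesis by blast
  next
    case False
    hence "- u x1 > 0" using u(3) by simp
    moreover have "\<forall>x \<in> tree m. \<bar>- u x\<bar> \<le> B" using u(1) by simp
    moreover have "\<forall>x \<in> tree m. - Delta m \<beta> (\<lambda>x. - u x) x = lam * (- u x)"
      using u(4) by (simp add: Delta_neg)
    moreover have "\<forall>xs. branch m xs \<longrightarrow> (\<lambda>n. - u (xs n)) \<longlonglongrightarrow> 0"
      using u(5) tendsto_minus[of _ 0] by fastforce
    ultimately show ?thesis using u(2) by (intro exI[of _ "\<lambda>x. - u x"]) blast
  qed
qed

theorem corollary5p3:
  fixes m :: nat and \<beta> lam :: real
  assumes "m \<ge> 2" and "0 < \<beta>" and "\<beta> < 1 / 2"
    and "is_eigenvalue m \<beta> lam"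
  shows "lam \<ge> lambda1 m \<beta>"
proof -
  have m1: "m \<ge> 1" using assms(1) by simp
  have b: "0 < \<beta>" "\<beta> < 1" using assms(2,3) by auto
  obtain u B x1 where u: "\<forall>x \<in> tree m. \<bar>u x\<bar> \<le> B" "x1 \<in> tree m" "u x1 > 0"
    "\<forall>x \<in> tree m. - Delta m \<beta> u x = lam * u x"
    "\<forall>xs. branch m xs \<longrightarrow> (\<lambda>n. u (xs n)) \<longlonglongrightarrow> 0"
    using eigen_pos[OF assms(4)] by blast
  have "a \<le> lam" if aA: "a \<in> A_set m \<beta>" for a
  proof (rule ccontr)
    assume "\<not> a \<le> lam"
    hence alam: "lam < a" by simp
    from aA obtain v c C where a0: "a > 0" and cC: "0 < c" "c < C"
      and v: "\<forall>x \<in> tree m. c < v x \<and> v x < C \<and> Delta m \<beta> v x + a * v x \<le> 0"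
      unfolding A_set_def by blast
    define S where "S = Sup ((\<lambda>x. u x / v x) ` tree m)"
    have ne: "tree m \<noteq> {}" using u(2) by blast
    have bdd: "bdd_above ((\<lambda>x. u x / v x) ` tree m)"
    proof (rule bdd_aboveI2)
      fix x assume x: "x \<in> tree m"
      have vx: "c < v x" using v x by blast
      have "u x \<le> B" using u(1) x by auto
      have B0: "B \<ge> 0" using u(1,2) by force
      have "u x / v x \<le> B / v x" using \<open>u x \<le> B\<close> vx cC by (simp add: divide_right_mono)
      also have "\<dots> \<le> B / c" using B0 vx cC by (simp add: frac_le)
      finally show "u x / v x \<le> B / c" .
    qed
    have uS: "u x \<le> S * v x" if "x \<in> tree m" for x
    proof -
      have "u x / v x \<le> S" unfolding S_def using bdd that by (rule cSUP_upper2) simp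
      moreover have "v x > 0" using v that cC by force
      ultimately show ?thesis by (simp add: divide_le_eq)
    qed
    have S0: "S > 0"
    proof -
      have "v x1 > 0" using v u(2) cC by force
      hence "u x1 / v x1 > 0" using u(3) by simp
      moreover have "u x1 / v x1 \<le> S" unfolding S_def using bdd u(2) by (rule cSUP_upper2) simp
      ultimately show ?thesis by simp
    qed
    define t where "t = (if lam > 0 then S * lam / a else 0)"
    have t0: "t \<ge> 0" using S0 a0 by (simp add: t_def)
    obtain x0 where x0: "x0 \<in> tree m" "u x0 > t * v x0"
    proof (cases "lam > 0")
      case True
      have "t < S" using True S0 alam a0 by (simp add: t_def field_simps)
      hence "\<exists>x\<in>tree m. t < u x / v x" using less_cSUP_iff[OF ne bdd] unfolding S_def by blast
      then obtain x where "x \<in> tree m" "t < u x / v x" by blast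
      moreover have "v x > 0" using v \<open>x \<in> tree m\<close> cC by force
      ultimately show ?thesis using that by (simp add: less_divide_eq)
    next
      case False
      thus ?thesis using that u(2,3) by (simp add: t_def)
    qed
    define w where "w x = t * v x - u x" for x
    define w0 where "w0 = w x0"
    have w00: "w0 < 0" using x0 by (simp add: w0_def w_def)
    have H1: "\<forall>x\<in>tree m. w x \<le> w0 \<longrightarrow> Delta m \<beta> w x \<le> 0"
    proof (intro ballI impI)
      fix x assume x: "x \<in> tree m" and wx: "w x \<le> w0"
      have "Delta m \<beta> w x = t * Delta m \<beta> v x - Delta m \<beta> u x"
        unfolding w_def by (rule Delta_lin)
      also have "\<dots> = t * Delta m \<beta> v x + lam * u x" using u(4) x by force
      also have "\<dots> \<le> t * (- a * v x) + lam * u x"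
        using v x t0 by (intro add_right_mono mult_left_mono) force+
      also have "\<dots> \<le> 0"
      proof (cases "lam > 0")
        case True
        have "lam * u x \<le> lam * (S * v x)" using uS[OF x] True by simp
        moreover have "t * a = S * lam" using True a0 by (simp add: t_def)
        have "t * (- a * v x) = - ((t * a) * v x)" by (simp add: algebra_simps)
        also have "\<dots> = - (lam * (S * v x))" using \<open>t * a = S * lam\<close> by (simp add: algebra_simps)
        finally show ?thesis using \<open>lam * u x \<le> lam * (S * v x)\<close> by linarith
      next
        case False
        hence "t = 0" by (simp add: t_def)
        hence "u x > 0" using wx w00 by (simp add: w_def)
        with False \<open>t = 0\<close> show ?thesis by (simp add: mult_nonpos_nonneg)
      qed
      finally show "Delta m \<beta> w x \<le> 0" .
    qed
    obtain xs N where xs: "branch m xs" "\<forall>n\<ge>N. w (xs n) \<le> w0"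
      using descent[OF m1 b H1 x0(1)] w0_def by blast
    have lim: "(\<lambda>n. u (xs n)) \<longlonglongrightarrow> 0" using u(5) xs(1) by blast
    have "\<forall>\<^sub>F n in sequentially. u (xs n) < - w0"
      using order_tendstoD(2)[OF lim] w00 by simp
    then obtain M where M: "\<forall>n\<ge>M. u (xs n) < - w0" by (auto simp: eventually_sequentially)
    define n where "n = max M N"
    have "u (xs n) < - w0" using M by (simp add: n_def)
    moreover have "w (xs n) \<le> w0" using xs(2) by (simp add: n_def)
    moreover have "v (xs n) > 0" using v branch_tree[OF xs(1), of n] cC by force
    ultimately have "t * v (xs n) < 0" by (simp add: w_def)
    with t0 \<open>v (xs n) > 0\<close> show False by (simp add: mult_less_0_iff)
  qed
  moreover have "A_set m \<beta> \<noteq> {}" using A_nonempty[OF m1 assms(2,3)] .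
  ultimately show ?thesis unfolding lambda1_def by (intro cSup_least) auto
qed

end
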